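(* Let $\alpha\in\mathbb{R}$ and let $\mathbb{Q}[x]^+_{x=\alpha}=\{p\in\mathbb{Q}[x]: p(\alpha)>0\}$. Suppose $\mathbb{Q}[x]^+_{x=\alpha}=H_1\sqcup H_2$ with $H_1,H_2$ disjoint nonempty subsets, each closed under addition and multiplication. Let $H_+=\{p\in\mathbb{Q}[x]^+_{x=\alpha}: p'(\alpha)>0\}$, $H_0=\{p\in\mathbb{Q}[x]^+_{x=\alpha}: p'(\alpha)=0\}$, $H_-=\{p\in\mathbb{Q}[x]^+_{x=\alpha}: p'(\alpha)<0\}$. Then either $H_1\subseteq H_+\cup H_0$ and $H_2\subseteq H_-\cup H_0$, or $H_1\subseteq H_-\cup H_0$ and $H_2\subseteq H_+\cup H_0$. *)

theory Defs
  imports "HOL-Computational_Algebra.Polynomial" Complex_Main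
begin

definition qeval :: "rat poly \<Rightarrow> real \<Rightarrow> real" where
  "qeval p a = poly (map_poly of_rat p) a"

definition Qpos_at :: "real \<Rightarrow> rat poly set" where
  "Qpos_at a = {p. qeval p a > 0}"

definition add_mult_closed :: "rat poly set \<Rightarrow> bool" where
  "add_mult_closed H \<longleftrightarrow> (\<forall>p\<in>H. \<forall>q\<in>H. p + q \<in> H \<and> p * q \<in> H)"

end

theory Submission
  imports Defs
begin

lemma mp_add: "map_poly (of_rat::rat\<Rightarrow>real) (p + q) = map_poly of_rat p + map_poly of_rat q"
  by (intro poly_eqI) (simp add: coeff_map_poly of_rat_add)
lemma mp_diff: "map_poly (of_rat::rat\<Rightarrow>real) (p - q) = map_poly of_rat p - map_poly of_rat q"
  by (intro poly_eqI) (simp add: coeff_map_poly of_rat_diff)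
lemma mp_mult: "map_poly (of_rat::rat\<Rightarrow>real) (p * q) = map_poly of_rat p * map_poly of_rat q"
  by (intro poly_eqI) (simp add: coeff_map_poly coeff_mult of_rat_sum of_rat_mult)

lemma qe_add[simp]: "qeval (p + q) a = qeval p a + qeval q a"
  by (simp add: qeval_def mp_add)
lemma qe_diff[simp]: "qeval (p - q) a = qeval p a - qeval q a"
  by (simp add: qeval_def mp_diff)
lemma qe_mult[simp]: "qeval (p * q) a = qeval p a * qeval q a"
  by (simp add: qeval_def mp_mult)
lemma qe_smult[simp]: "qeval (smult c p) a = of_rat c * qeval p a"
  by (simp add: qeval_def map_poly_smult of_rat_mult)
lemma qe_pCons[simp]: "qeval (pCons c p) a = of_rat c + a * qeval p a"
  by (simp add: qeval_def map_poly_pCons)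
lemma qe_0[simp]: "qeval 0 a = 0"
  by (simp add: qeval_def)
lemma qe_1[simp]: "qeval 1 a = 1"
  by (simp add: qeval_def)
lemma qe_power[simp]: "qeval (p ^ n) a = qeval p a ^ n"
  by (induction n) auto
lemma qe_minus[simp]: "qeval (- p) a = - qeval p a"
  using qe_diff[of 0 p a] by simp

lemma lin_form: "degree (L::rat poly) \<le> 1 \<Longrightarrow> L = [:coeff L 0, coeff L 1:]"
  by (intro poly_eqI) (auto simp: coeff_pCons split: nat.splits intro!: coeff_eq_0)

lemma "qeval [:c, d:] a = of_rat c + a * of_rat d" by simp
lemma "pderiv [:c, d:] = [:d:]" by (simp add: pderiv_pCons)

lemma qe_pderiv_mult[simp]: "qeval (pderiv (p * q)) a = qeval p a * qeval (pderiv q) a + qeval q a * qeval (pderiv p) a"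
  by (simp add: pderiv_mult)

definition tinyP :: "rat poly set \<Rightarrow> real \<Rightarrow> nat \<Rightarrow> bool" where
  "tinyP H a n \<longleftrightarrow> (\<forall>c \<delta>. c \<noteq> 0 \<longrightarrow> \<delta> > 0 \<longrightarrow> (\<exists>F\<in>H. degree F \<le> n \<and> coeff F n = c \<and>
      \<bar>qeval F a\<bar> < \<delta> \<and> \<bar>qeval (pderiv F) a\<bar> < \<delta>))"

lemma tiny_step:
  assumes Hmul: "\<forall>p\<in>H. \<forall>q\<in>H. p*q \<in> H"
  and l: "l \<in> H" "degree l \<le> 1" "coeff l 1 \<noteq> 0" "\<bar>qeval l a\<bar> \<le> 1" "\<bar>qeval (pderiv l) a\<bar> \<le> 1"
  and T: "tinyP H a n"
  shows "tinyP H a (Suc n)"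
  unfolding tinyP_def
proof (intro allI impI)
  fix c :: rat and \<delta> :: real
  assume c: "c \<noteq> 0" and d: "\<delta> > 0"
  have "c / coeff l 1 \<noteq> 0" using c l(3) by simp
  then obtain F where F: "F \<in> H" "degree F \<le> n" "coeff F n = c / coeff l 1"
    "\<bar>qeval F a\<bar> < \<delta>/2" "\<bar>qeval (pderiv F) a\<bar> < \<delta>/2"
    using T d unfolding tinyP_def by (metis half_gt_zero)
  have dF: "degree F = n" using F(2,3) \<open>c / coeff l 1 \<noteq> 0\<close> le_degree[of F n] by simp
  have dl: "degree l = 1" using l(2,3) le_degree by fastforce
  have "coeff (l * F) (Suc n) = c"
    using coeff_mult_degree_sum[of l F] dF dl F(3) l(3) by simp
  moreover have "degree (l * F) \<le> Suc n"
    using degree_mult_le[of l F] dF dl by simp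
  moreover have "\<bar>qeval (l*F) a\<bar> < \<delta>"
  proof -
    have "\<bar>qeval (l*F) a\<bar> = \<bar>qeval l a\<bar> * \<bar>qeval F a\<bar>" by (simp add: abs_mult)
    also have "\<dots> \<le> \<bar>qeval F a\<bar>" using l(4) by (simp add: mult_left_le_one_le)
    finally show ?thesis using F(4) d by linarith
  qed
  moreover have "\<bar>qeval (pderiv (l*F)) a\<bar> < \<delta>"
  proof -
    have "\<bar>qeval (pderiv (l*F)) a\<bar> \<le> \<bar>qeval l a\<bar> * \<bar>qeval (pderiv F) a\<bar> + \<bar>qeval F a\<bar> * \<bar>qeval (pderiv l) a\<bar>"
      by (simp add: abs_mult[symmetric] abs_triangle_ineq)
    also have "\<dots> \<le> \<bar>qeval (pderiv F) a\<bar> + \<bar>qeval F a\<bar>"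
      using l(4,5) by (intro add_mono) (simp_all add: mult_left_le_one_le mult_right_le_one_le)
    finally show ?thesis using F(4,5) by linarith
  qed
  ultimately show "\<exists>F\<in>H. degree F \<le> Suc n \<and> coeff F (Suc n) = c \<and> \<bar>qeval F a\<bar> < \<delta> \<and> \<bar>qeval (pderiv F) a\<bar> < \<delta>"
    using Hmul F(1) l(1) by blast
qed

lemma tiny_all:
  assumes Hmul: "\<forall>p\<in>H. \<forall>q\<in>H. p*q \<in> H"
  and l: "l \<in> H" "degree l \<le> 1" "coeff l 1 \<noteq> 0" "\<bar>qeval l a\<bar> \<le> 1" "\<bar>qeval (pderiv l) a\<bar> \<le> 1"
  and T: "tinyP H a 2"
  shows "n \<ge> 2 \<Longrightarrow> tinyP H a n"
proof (induction n rule: nat_induct_at_least)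
  case base then show ?case using T .
next
  case (Suc n) then show ?case using tiny_step[OF Hmul l] by blast
qed

lemma tiny_base:
  assumes Hsm: "\<forall>p\<in>H. \<forall>r>0. smult r p \<in> H"
  and P: "\<And>\<delta>. \<delta> > 0 \<Longrightarrow> \<exists>F\<in>H. degree F \<le> 2 \<and> coeff F 2 = 1 \<and> \<bar>qeval F a\<bar> < \<delta> \<and> \<bar>qeval (pderiv F) a\<bar> < \<delta>"
  and N: "\<And>\<delta>. \<delta> > 0 \<Longrightarrow> \<exists>F\<in>H. degree F \<le> 2 \<and> coeff F 2 = -1 \<and> \<bar>qeval F a\<bar> < \<delta> \<and> \<bar>qeval (pderiv F) a\<bar> < \<delta>"
  shows "tinyP H a 2"
  unfolding tinyP_def
proof (intro allI impI)
  fix c :: rat and \<delta> :: real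
  assume c: "c \<noteq> 0" and d: "\<delta> > 0"
  define r where "r = \<bar>c\<bar>"
  have r: "r > 0" "of_rat r > (0::real)" using c by (auto simp: r_def)
  have "\<delta> / of_rat r > 0" using d r by simp
  then obtain F where F: "F \<in> H" "degree F \<le> 2" "coeff F 2 = sgn c"
    "\<bar>qeval F a\<bar> < \<delta> / of_rat r" "\<bar>qeval (pderiv F) a\<bar> < \<delta> / of_rat r"
    using P N c by (cases "c > 0") (auto simp: sgn_if)
  have "smult r F \<in> H" using Hsm F(1) r by blast
  moreover have "coeff (smult r F) 2 = c" using F(3) by (simp add: r_def abs_mult_sgn)
  moreover have "degree (smult r F) \<le> 2" using F(2) by simp
  moreover have "\<bar>qeval (smult r F) a\<bar> < \<delta>"
    using F(4) r by (simp add: abs_mult pos_less_divide_eq mult.commute)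
  moreover have "\<bar>qeval (pderiv (smult r F)) a\<bar> < \<delta>"
    using F(5) r by (simp add: pderiv_smult abs_mult pos_less_divide_eq mult.commute)
  ultimately show "\<exists>F\<in>H. degree F \<le> 2 \<and> coeff F 2 = c \<and> \<bar>qeval F a\<bar> < \<delta> \<and> \<bar>qeval (pderiv F) a\<bar> < \<delta>"
    by blast
qed

lemma descent:
  fixes X :: "rat poly set"
  assumes pos: "\<forall>w\<in>X. qeval w a > 0"
  and tiny: "\<And>n c \<delta>. n \<ge> 2 \<Longrightarrow> c \<noteq> 0 \<Longrightarrow> \<delta> > 0 \<Longrightarrow> \<exists>E. degree E \<le> n \<and> coeff E n = c \<and>
      \<bar>qeval E a\<bar> < \<delta> \<and> \<bar>qeval (pderiv E) a\<bar> < \<delta> \<and> (\<forall>w\<in>X. qeval (w+E) a > 0 \<longrightarrow> w + E \<in> X)"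
  shows "w \<in> X \<Longrightarrow> \<epsilon> > 0 \<Longrightarrow> \<exists>L\<in>X. degree L \<le> 1 \<and> \<bar>qeval L a - qeval w a\<bar> < \<epsilon> \<and>
     \<bar>qeval (pderiv L) a - qeval (pderiv w) a\<bar> < \<epsilon>"
proof (induction "degree w" arbitrary: w \<epsilon> rule: less_induct)
  case less
  show ?case
  proof (cases "degree w \<le> 1")
    case True then show ?thesis using less.prems by force
  next
    case False
    define n where "n = degree w"
    have n2: "n \<ge> 2" using False n_def by simp
    have wpos: "qeval w a > 0" using pos less.prems by blast
    have c: "- coeff w n \<noteq> 0" using n_def n2 by (simp add: leading_coeff_0_iff) (metis degree_0 not_numeral_le_zero)
    define \<delta> where "\<delta> = min (\<epsilon>/2) (qeval w a / 2)"
    have d: "\<delta> > 0" using less.prems wpos by (simp add: \<delta>_def)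
    obtain E where E: "degree E \<le> n" "coeff E n = - coeff w n" "\<bar>qeval E a\<bar> < \<delta>"
       "\<bar>qeval (pderiv E) a\<bar> < \<delta>" "\<forall>w\<in>X. qeval (w+E) a > 0 \<longrightarrow> w + E \<in> X"
      using tiny[OF n2 c d] by blast
    have pos': "qeval (w + E) a > 0" using E(3) wpos abs_ge_minus_self[of "qeval E a"] by (simp add: \<delta>_def)
    have wE: "w + E \<in> X" using E(5) pos' less.prems by blast
    have "w + E \<noteq> 0" using pos' by (metis qe_0 less_irrefl)
    moreover have "degree (w + E) \<le> n" using E(1) n_def degree_add_le by blast
    moreover have "coeff (w + E) n = 0" using E(2) by simp
    ultimately have deg: "degree (w + E) < n"
      by (metis le_neq_implies_less leading_coeff_0_iff)
    have "\<epsilon>/2 > 0" using less.prems by simp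
    from less.hyps[OF deg[unfolded n_def] wE this] obtain L where
      L: "L \<in> X" "degree L \<le> 1" "\<bar>qeval L a - qeval (w+E) a\<bar> < \<epsilon>/2"
      "\<bar>qeval (pderiv L) a - qeval (pderiv (w+E)) a\<bar> < \<epsilon>/2" by blast
    have "\<bar>qeval L a - qeval w a\<bar> < \<epsilon>" using L(3) E(3) unfolding \<delta>_def by (simp add: abs_if split: if_split_asm)
    moreover have "\<bar>qeval (pderiv L) a - qeval (pderiv w) a\<bar> < \<epsilon>"
      using L(4) E(4) unfolding \<delta>_def by (simp add: pderiv_add abs_if split: if_split_asm)
    ultimately show ?thesis using L(1,2) by blast
  qed
qed

lemma lin_mult: "[:p,q:] * [:r,t:] = [:p*r, p*t+q*r, q*t:]"
  by (simp add: algebra_simps)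

lemma cl_add: "add_mult_closed A \<Longrightarrow> p \<in> A \<Longrightarrow> q \<in> A \<Longrightarrow> p + q \<in> A"
  by (simp add: add_mult_closed_def)
lemma cl_mult: "add_mult_closed A \<Longrightarrow> p \<in> A \<Longrightarrow> q \<in> A \<Longrightarrow> p * q \<in> A"
  by (simp add: add_mult_closed_def)

lemma cl_nat: "add_mult_closed A \<Longrightarrow> p \<in> A \<Longrightarrow> smult (of_nat (Suc n)) p \<in> A"
proof (induction n)
  case 0 then show ?case by simp
next
  case (Suc n)
  have e: "smult (of_nat (Suc (Suc n))) p = smult (of_nat (Suc n)) p + p"
    using smult_add_left[of "of_nat (Suc n)" 1 p] by (simp add: add.commute)
  have "smult (of_nat (Suc n)) p \<in> A" using Suc by blast
  then show ?case unfolding e using cl_add[OF Suc.prems(1) _ Suc.prems(2)] by blast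
qed

lemma cl_pow: "add_mult_closed A \<Longrightarrow> p \<in> A \<Longrightarrow> p ^ Suc n \<in> A"
proof (induction n)
  case 0 then show ?case by simp
next
  case (Suc n) then show ?case using cl_mult[of A p "p ^ Suc n"] by simp
qed

locale part =
  fixes a :: real and X Y :: "rat poly set"
  assumes cover: "Qpos_at a = X \<union> Y" and disj: "X \<inter> Y = {}"
    and clX: "add_mult_closed X" and clY: "add_mult_closed Y"
begin

lemma posX: "p \<in> X \<Longrightarrow> qeval p a > 0" using cover unfolding Qpos_at_def by blast
lemma posY: "p \<in> Y \<Longrightarrow> qeval p a > 0" using cover unfolding Qpos_at_def by blast
lemma inXY: "qeval p a > 0 \<Longrightarrow> p \<in> X \<or> p \<in> Y" using cover unfolding Qpos_at_def by blast
lemma notXY: "p \<in> X \<Longrightarrow> p \<in> Y \<Longrightarrow> False" using disj by blast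

lemma T2X: "p \<in> X \<Longrightarrow> q \<in> Y \<Longrightarrow> qeval (p - q) a > 0 \<Longrightarrow> p - q \<in> X"
proof -
  assume h: "p \<in> X" "q \<in> Y" "qeval (p - q) a > 0"
  show "p - q \<in> X"
  proof (rule ccontr)
    assume "p - q \<notin> X"
    then have "p - q \<in> Y" using inXY h(3) by blast
    then have "p - q + q \<in> Y" using cl_add[OF clY _ h(2)] by blast
    then show False using notXY h(1) by simp
  qed
qed
lemma T2Y: "p \<in> Y \<Longrightarrow> q \<in> X \<Longrightarrow> qeval (p - q) a > 0 \<Longrightarrow> p - q \<in> Y"
proof -
  assume h: "p \<in> Y" "q \<in> X" "qeval (p - q) a > 0"
  show "p - q \<in> Y"
  proof (rule ccontr)
    assume "p - q \<notin> Y"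
    then have "p - q \<in> X" using inXY h(3) by blast
    then have "p - q + q \<in> X" using cl_add[OF clX _ h(2)] by blast
    then show False using notXY h(1) by simp
  qed
qed

lemma scale_gen:
  assumes A: "add_mult_closed A" and B: "add_mult_closed B" and AB: "\<forall>p. p \<in> A \<longrightarrow> p \<notin> B"
    and cov: "\<forall>p. qeval p a > 0 \<longrightarrow> p \<in> A \<or> p \<in> B" and posA: "\<forall>p. p \<in> A \<longrightarrow> qeval p a > 0"
    and p: "p \<in> A" and r: "r > 0"
  shows "smult r p \<in> A"
proof (rule ccontr)
  assume nA: "smult r p \<notin> A"
  obtain m n where mn: "quotient_of r = (m, n)" by (cases "quotient_of r")
  have n: "n > 0" using quotient_of_denom_pos[OF mn] .
  have req: "r = of_int m / of_int n" using quotient_of_div[OF mn] .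
  have m: "m > 0" using r n req by (simp add: zero_less_divide_iff)
  have "qeval (smult r p) a > 0" using posA p r by simp
  then have rB: "smult r p \<in> B" using cov nA by blast
  obtain m' where m': "nat m = Suc m'" using m by (metis gr0_implies_Suc zero_less_nat_eq)
  obtain n' where n': "nat n = Suc n'" using n by (metis gr0_implies_Suc zero_less_nat_eq)
  have "smult (of_nat (Suc n')) (smult r p) \<in> B" using cl_nat[OF B rB] .
  moreover have "smult (of_nat (Suc m')) p \<in> A" using cl_nat[OF A p] .
  moreover have "smult (of_nat (Suc n')) (smult r p) = smult (of_nat (Suc m')) p"
  proof -
    have e1: "(of_nat (Suc n') :: rat) = of_int n" using of_nat_nat[of n] n n' by simp
    have e2: "(of_nat (Suc m') :: rat) = of_int m" using of_nat_nat[of m] m m' by simp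
    have "of_nat (Suc n') * r = (of_nat (Suc m') :: rat)"
      unfolding e1 e2 req using n by simp
    then show ?thesis by simp
  qed
  ultimately show False using AB by (metis (no_types))
qed

lemma scaleX: "p \<in> X \<Longrightarrow> r > 0 \<Longrightarrow> smult r p \<in> X"
proof -
  have "\<forall>p. p \<in> X \<longrightarrow> p \<notin> Y" "\<forall>p. qeval p a > 0 \<longrightarrow> p \<in> X \<or> p \<in> Y" "\<forall>p. p \<in> X \<longrightarrow> qeval p a > 0"
    using notXY inXY posX by blast+
  from scale_gen[OF clX clY this] show "p \<in> X \<Longrightarrow> r > 0 \<Longrightarrow> smult r p \<in> X" by blast
qed
lemma scaleY: "p \<in> Y \<Longrightarrow> r > 0 \<Longrightarrow> smult r p \<in> Y"
proof -
  have "\<forall>p. p \<in> Y \<longrightarrow> p \<notin> X" "\<forall>p. qeval p a > 0 \<longrightarrow> p \<in> Y \<or> p \<in> X" "\<forall>p. p \<in> Y \<longrightarrow> qeval p a > 0"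
    using notXY inXY posY by blast+
  from scale_gen[OF clY clX this] show "p \<in> Y \<Longrightarrow> r > 0 \<Longrightarrow> smult r p \<in> Y" by blast
qed

end

definition u :: "rat \<Rightarrow> rat \<Rightarrow> rat poly" where "u \<sigma> b = [:-\<sigma>*b, \<sigma>:]"

lemma ev_u[simp]: "qeval (u \<sigma> b) a = of_rat \<sigma> * (a - of_rat b)"
  by (simp add: u_def of_rat_mult of_rat_minus algebra_simps)
lemma dv_u[simp]: "qeval (pderiv (u \<sigma> b)) a = of_rat \<sigma>"
  by (simp add: u_def pderiv_pCons)
lemma deg_u: "degree (u \<sigma> b) \<le> 1"
  by (simp add: u_def)
lemma coeff1_u: "coeff (u \<sigma> b) 1 = \<sigma>"
  by (simp add: u_def)
lemma deg_uu: "degree (u \<sigma> b * u \<tau> c) \<le> 2"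
  by (simp add: u_def lin_mult)
lemma coeff2_uu: "coeff (u \<sigma> b * u \<tau> c) 2 = \<sigma> * \<tau>"
  by (simp add: u_def lin_mult numeral_2_eq_2)

lemma dens:
  fixes a r :: real
  assumes "\<sigma> = 1 \<or> \<sigma> = -1" "r > 0"
  shows "\<exists>b. 0 < of_rat \<sigma> * (a - of_rat b) \<and> of_rat \<sigma> * (a - of_rat b) < r"
  using assms(1)
proof
  assume "\<sigma> = 1"
  obtain q where "a - r < of_rat q" "of_rat q < a" using of_rat_dense[of "a - r" a] assms(2) by auto
  then show ?thesis using \<open>\<sigma> = 1\<close> by (intro exI[of _ q]) simp
next
  assume "\<sigma> = -1"
  obtain q where "a < of_rat q" "of_rat q < a + r" using of_rat_dense[of a "a + r"] assms(2) by auto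
  then show ?thesis using \<open>\<sigma> = -1\<close> by (intro exI[of _ q]) (simp add: of_rat_minus)
qed

lemma lin_dv: "degree L \<le> 1 \<Longrightarrow> qeval (pderiv L) a = of_rat (coeff L 1)"
  by (subst lin_form, assumption) (simp add: pderiv_pCons)

context part
begin

lemma const_X: "1 \<in> X \<Longrightarrow> c > 0 \<Longrightarrow> [:c:] \<in> X"
  using scaleX[of 1 c] by simp

end

locale caseA = part +
  fixes \<sigma> b0 :: rat
  assumes one: "1 \<in> X" and sg: "\<sigma> = 1 \<or> \<sigma> = -1" and ub0: "u \<sigma> b0 \<in> Y"
begin

abbreviation s where "s \<equiv> (of_rat \<sigma> :: real)"
definition f0 where "f0 = s * (a - of_rat b0)"

lemma ss: "s * s = 1" using sg by (auto simp: of_rat_minus)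
lemma abss: "\<bar>s\<bar> = 1" using sg by (auto simp: of_rat_minus)
lemma sgsg: "\<sigma> * \<sigma> = 1" using sg by auto
lemma f0pos: "f0 > 0" using posY[OF ub0] by (simp add: f0_def)

lemma region:
  assumes "0 < s * (a - of_rat b)" "s * (a - of_rat b) \<le> f0"
  shows "u \<sigma> b \<in> Y"
proof (cases "b = b0")
  case True then show ?thesis using ub0 by simp
next
  case False
  define c where "c = \<sigma> * (b - b0)"
  have "of_rat c = f0 - s * (a - of_rat b)"
    by (simp add: c_def f0_def of_rat_mult of_rat_diff algebra_simps)
  moreover have "c \<noteq> 0" using False sg by (auto simp: c_def)
  ultimately have "c > 0" using assms(2) by (metis diff_ge_0_iff_ge less_eq_rat_def of_rat_less_eq of_rat_0)
  then have cX: "[:c:] \<in> X" using const_X one by blast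
  have eq: "u \<sigma> b0 - [:c:] = u \<sigma> b" by (simp add: u_def c_def algebra_simps)
  show ?thesis using T2Y[OF ub0 cX] assms(1) unfolding eq by simp
qed

lemma vX:
  assumes "qeval (u (-\<sigma>) g) a > 0"
  shows "u (-\<sigma>) g \<in> X"
proof (rule ccontr)
  assume "u (-\<sigma>) g \<notin> X"
  then have vY: "u (-\<sigma>) g \<in> Y" using inXY assms by blast
  define c where "c = \<sigma> * (g - b0)"
  have eq: "u \<sigma> b0 + u (-\<sigma>) g = [:c:]" by (simp add: u_def c_def algebra_simps)
  have "u \<sigma> b0 + u (-\<sigma>) g \<in> Y" using cl_add[OF clY ub0 vY] .
  moreover have "qeval (u \<sigma> b0 + u (-\<sigma>) g) a > 0" using posY[OF ub0] assms by simp
  then have "of_rat c > (0::real)" unfolding eq by simp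
  then have "[:c:] \<in> X" using const_X one by simp
  ultimately show False using notXY eq by simp
qed

lemma tinyY: "n \<ge> 2 \<Longrightarrow> tinyP Y a n"
proof -
  assume n: "n \<ge> 2"
  obtain b1 where b1: "0 < s * (a - of_rat b1)" "s * (a - of_rat b1) < min 1 f0"
    using dens[OF sg, of "min 1 f0" a] f0pos by auto
  have lY: "u \<sigma> b1 \<in> Y" using region b1 by simp
  have l1: "coeff (u \<sigma> b1) 1 \<noteq> 0" using sg coeff1_u[of \<sigma> b1] by auto
  have l2: "\<bar>qeval (u \<sigma> b1) a\<bar> \<le> 1" using b1 by simp
  have l3: "\<bar>qeval (pderiv (u \<sigma> b1)) a\<bar> \<le> 1" using abss by simp
  have P: "\<exists>F\<in>Y. degree F \<le> 2 \<and> coeff F 2 = 1 \<and> \<bar>qeval F a\<bar> < \<delta> \<and> \<bar>qeval (pderiv F) a\<bar> < \<delta>"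
    if d: "\<delta> > 0" for \<delta>
  proof -
    obtain b where b: "0 < s * (a - of_rat b)" "s * (a - of_rat b) < min (min 1 f0) (\<delta>/2)"
      using dens[OF sg, of "min (min 1 f0) (\<delta>/2)" a] f0pos d by auto
    define e where "e = s * (a - of_rat b)"
    have e: "0 < e" "e < 1" "e \<le> f0" "e < \<delta>/2" using b by (auto simp: e_def)
    have bY: "u \<sigma> b \<in> Y" using region e by (simp add: e_def)
    have "u \<sigma> b * u \<sigma> b \<in> Y" using cl_mult[OF clY bY bY] .
    moreover have "\<bar>qeval (u \<sigma> b * u \<sigma> b) a\<bar> < \<delta>"
    proof -
      have "e * e < e" using e by simp
      then have "e * e < \<delta>" using e by linarith
      then show ?thesis using e by (simp add: e_def[symmetric])
    qed
    moreover have "\<bar>qeval (pderiv (u \<sigma> b * u \<sigma> b)) a\<bar> < \<delta>"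
      using e abss by (simp add: e_def[symmetric] abs_mult)
    ultimately show ?thesis using deg_uu coeff2_uu sgsg by metis
  qed
  have N: "\<exists>F\<in>Y. degree F \<le> 2 \<and> coeff F 2 = -1 \<and> \<bar>qeval F a\<bar> < \<delta> \<and> \<bar>qeval (pderiv F) a\<bar> < \<delta>"
    if d: "\<delta> > 0" for \<delta>
  proof -
    define e where "e = s * (a - of_rat b1)"
    have e: "0 < e" "e < 1" "e \<le> f0" using b1 by (auto simp: e_def)
    obtain c where c: "(0::real) < of_rat c" "(of_rat c::real) < min (\<delta>/2) 1"
      using of_rat_dense[of 0 "min (\<delta>/2) 1"] d by auto
    have cpos: "c > 0" using c(1) by simp
    have sg': "-\<sigma> = 1 \<or> -\<sigma> = -1" using sg by auto
    obtain g where g: "0 < of_rat (-\<sigma>) * (a - of_rat g)"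
       "of_rat (-\<sigma>) * (a - of_rat g) < min (min (\<delta>/4) (of_rat c * e)) 1"
      using dens[OF sg', of "min (min (\<delta>/4) (of_rat c * e)) 1" a] d c e by auto
    define e' where "e' = of_rat (-\<sigma>) * (a - of_rat g)"
    have e': "0 < e'" "e' < \<delta>/4" "e' < of_rat c * e" "e' < 1" using g by (auto simp: e'_def)
    have vXg: "u (-\<sigma>) g \<in> X" using vX e' by (simp add: e'_def)
    define Q where "Q = smult c (u \<sigma> b1) - u (-\<sigma>) g * u (-\<sigma>) g"
    have evQ: "qeval Q a = of_rat c * e - e' * e'" by (simp add: Q_def e_def e'_def)
    have "e' * e' < e'" using e' mult_strict_right_mono[of e' 1 e'] by simp
    then have Qpos: "qeval Q a > 0" using evQ e' by linarith
    have "smult c (u \<sigma> b1) \<in> Y" using scaleY[OF lY cpos] .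
    moreover have "u (-\<sigma>) g * u (-\<sigma>) g \<in> X" using cl_mult[OF clX vXg vXg] .
    ultimately have QY: "Q \<in> Y" using T2Y Qpos unfolding Q_def by blast
    have "qeval Q a < \<delta>"
    proof -
      have "of_rat c * e < of_rat c" using c e by simp
      moreover have "e' * e' \<ge> 0" by simp
      moreover have "(of_rat c::real) < \<delta>/2" using c(2) by simp
      ultimately show ?thesis using evQ d by linarith
    qed
    then have "\<bar>qeval Q a\<bar> < \<delta>" using Qpos by simp
    moreover have "qeval (pderiv Q) a = s * (of_rat c + 2 * e')"
      by (simp add: Q_def pderiv_diff pderiv_smult e'_def of_rat_minus algebra_simps)
    then have "\<bar>qeval (pderiv Q) a\<bar> < \<delta>" using abss c e' by (simp add: abs_mult)
    moreover have "degree Q \<le> 2"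
    proof -
      have "degree (smult c (u \<sigma> b1)) \<le> 2" using deg_u[of \<sigma> b1] degree_smult_le[of c "u \<sigma> b1"] by linarith
      then show ?thesis unfolding Q_def using deg_uu[of "-\<sigma>" g "-\<sigma>" g] by (rule degree_diff_le)
    qed
    moreover have "coeff Q 2 = -1"
    proof -
      have "coeff (u \<sigma> b1) 2 = 0" using deg_u[of \<sigma> b1] by (intro coeff_eq_0) simp
      then show ?thesis using coeff2_uu[of "-\<sigma>" g "-\<sigma>" g] sgsg by (simp add: Q_def)
    qed
    ultimately show ?thesis using QY by blast
  qed
  have "tinyP Y a 2" using tiny_base[of Y a] P N scaleY by blast
  then show ?thesis using tiny_all[of Y "u \<sigma> b1" a n] cl_mult[OF clY] lY deg_u l1 l2 l3 n by blast
qed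


lemma partb:
  assumes vY: "v \<in> Y" shows "s * qeval (pderiv v) a \<ge> 0"
proof (rule ccontr)
  assume neg: "\<not> s * qeval (pderiv v) a \<ge> 0"
  define \<epsilon> where "\<epsilon> = - (s * qeval (pderiv v) a) / 2"
  have eps: "\<epsilon> > 0" using neg by (simp add: \<epsilon>_def)
  have tiny: "\<exists>E. degree E \<le> n \<and> coeff E n = c \<and> \<bar>qeval E a\<bar> < \<delta> \<and> \<bar>qeval (pderiv E) a\<bar> < \<delta> \<and>
      (\<forall>w\<in>Y. qeval (w+E) a > 0 \<longrightarrow> w + E \<in> Y)" if hh: "n \<ge> 2" "c \<noteq> 0" "\<delta> > 0" for n c \<delta>
  proof -
    obtain F where "F \<in> Y" "degree F \<le> n" "coeff F n = c" "\<bar>qeval F a\<bar> < \<delta>" "\<bar>qeval (pderiv F) a\<bar> < \<delta>"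
      using tinyY[OF hh(1)] hh(2,3) unfolding tinyP_def by blast
    then show ?thesis using cl_add[OF clY] by blast
  qed
  have posall: "\<forall>w\<in>Y. qeval w a > 0" using posY by blast
  obtain L where L: "L \<in> Y" "degree L \<le> 1" "\<bar>qeval (pderiv L) a - qeval (pderiv v) a\<bar> < \<epsilon>"
    using descent[OF posall tiny vY eps] by blast
  define l0 l1 where "l0 = coeff L 0" and "l1 = coeff L 1"
  have Leq: "L = [:l0, l1:]" using lin_form[OF L(2)] by (simp add: l0_def l1_def)
  have dL: "qeval (pderiv L) a = of_rat l1" using lin_dv[OF L(2)] by (simp add: l1_def)
  have "s * of_rat l1 < 0"
  proof -
    have "\<bar>s * (qeval (pderiv L) a - qeval (pderiv v) a)\<bar> < \<epsilon>" using L(3) abss by (simp add: abs_mult)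
    then show ?thesis using dL neg by (simp add: \<epsilon>_def algebra_simps abs_less_iff)
  qed
  then have sl: "\<sigma> * l1 < 0" by (metis of_rat_less_0_iff of_rat_mult)
  then have l1nz: "l1 \<noteq> 0" by auto
  define t where "t = - \<sigma> * l1"
  define g where "g = - l0 / l1"
  have tpos: "t > 0" using sl by (simp add: t_def)
  have Lt: "L = smult t (u (-\<sigma>) g)"
  proof -
    have "t * (\<sigma> * g) = l0" using l1nz sgsg
      by (simp add: t_def g_def field_simps)
    moreover have "t * (- \<sigma>) = l1" using sgsg by (simp add: t_def)
    ultimately show ?thesis unfolding Leq by (simp add: u_def)
  qed
  have "qeval L a > 0" using posY[OF L(1)] .
  then have "of_rat t * qeval (u (-\<sigma>) g) a > 0" using Lt by simp
  then have "qeval (u (-\<sigma>) g) a > 0" using tpos by (simp add: zero_less_mult_iff)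
  then have "u (-\<sigma>) g \<in> X" using vX by blast
  then have "L \<in> X" using scaleX tpos Lt by simp
  then show False using notXY L(1) by blast
qed


lemma parta:
  assumes kX: "k \<in> X" shows "s * qeval (pderiv k) a \<le> 0"
proof (rule ccontr)
  assume "\<not> s * qeval (pderiv k) a \<le> 0"
  then have sd: "s * qeval (pderiv k) a > 0" by simp
  define a0 where "a0 = qeval k a"
  have a0: "a0 > 0" using posX[OF kX] by (simp add: a0_def)
  obtain M :: nat where M: "4 * a0 / (s * qeval (pderiv k) a * f0) < real M"
    using reals_Archimedean2 by blast
  have M': "4 * a0 < real (Suc M) * (s * qeval (pderiv k) a) * f0"
  proof -
    have "4 * a0 < real M * (s * qeval (pderiv k) a * f0)"
      using M sd f0pos by (simp add: pos_divide_less_eq)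
    also have "\<dots> \<le> real (Suc M) * (s * qeval (pderiv k) a * f0)"
      using sd f0pos by (intro mult_right_mono) auto
    finally show ?thesis by (simp add: mult.assoc)
  qed
  define K where "K = k ^ Suc M"
  have KX: "K \<in> X" using cl_pow[OF clX kX] by (simp add: K_def)
  define A where "A = qeval K a"
  define D where "D = s * qeval (pderiv K) a"
  have A: "A = a0 * a0 ^ M" by (simp add: A_def K_def a0_def)
  have D: "D = real (Suc M) * a0 ^ M * (s * qeval (pderiv k) a)"
    unfolding D_def K_def pderiv_power_Suc by (simp add: a0_def algebra_simps of_rat_add del: power_Suc)
  have Apos: "A > 0" using a0 by (simp add: A)
  have Dpos: "D > 0" using a0 sd by (simp add: D)
  have key: "4 * A < D * f0"
  proof -
    have "4 * A = (4 * a0) * a0 ^ M" by (simp add: A)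
    also have "\<dots> < (real (Suc M) * (s * qeval (pderiv k) a) * f0) * a0 ^ M"
      using M' a0 by (intro mult_strict_right_mono) auto
    also have "\<dots> = D * f0" by (simp add: D algebra_simps)
    finally show ?thesis .
  qed
  have tiny: "\<exists>E. degree E \<le> n \<and> coeff E n = c \<and> \<bar>qeval E a\<bar> < \<delta> \<and> \<bar>qeval (pderiv E) a\<bar> < \<delta> \<and>
      (\<forall>w\<in>X. qeval (w+E) a > 0 \<longrightarrow> w + E \<in> X)" if hh: "n \<ge> 2" "c \<noteq> 0" "\<delta> > 0" for n c \<delta>
  proof -
    have "-c \<noteq> 0" using hh(2) by simp
    then obtain F where F: "F \<in> Y" "degree F \<le> n" "coeff F n = -c" "\<bar>qeval F a\<bar> < \<delta>" "\<bar>qeval (pderiv F) a\<bar> < \<delta>"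
      using tinyY[OF hh(1)] hh(3) unfolding tinyP_def by blast
    have "\<forall>w\<in>X. qeval (w + - F) a > 0 \<longrightarrow> w + - F \<in> X"
      using T2X[OF _ F(1)] by simp
    moreover have "degree (- F) \<le> n" "coeff (- F) n = c" "\<bar>qeval (- F) a\<bar> < \<delta>" "\<bar>qeval (pderiv (- F)) a\<bar> < \<delta>"
      using F by (simp_all add: pderiv_minus)
    ultimately show ?thesis by blast
  qed
  have posall: "\<forall>w\<in>X. qeval w a > 0" using posX by blast
  define \<epsilon> where "\<epsilon> = min (D/2) A"
  have eps: "\<epsilon> > 0" using Apos Dpos by (simp add: \<epsilon>_def)
  obtain L where L: "L \<in> X" "degree L \<le> 1" "\<bar>qeval L a - A\<bar> < \<epsilon>"
      "\<bar>qeval (pderiv L) a - qeval (pderiv K) a\<bar> < \<epsilon>"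
    using descent[OF posall tiny KX eps] by (auto simp: A_def)
  define l0 l1 where "l0 = coeff L 0" and "l1 = coeff L 1"
  have Leq: "L = [:l0, l1:]" using lin_form[OF L(2)] by (simp add: l0_def l1_def)
  have dL: "qeval (pderiv L) a = of_rat l1" using lin_dv[OF L(2)] by (simp add: l1_def)
  have evL: "0 < qeval L a" "qeval L a < 2 * A" using posX[OF L(1)] L(3) by (auto simp: \<epsilon>_def abs_less_iff)
  have sl1: "s * of_rat l1 > D / 2"
  proof -
    have "\<bar>s * (qeval (pderiv L) a - qeval (pderiv K) a)\<bar> < \<epsilon>" using L(4) abss by (simp add: abs_mult)
    then have h: "\<bar>s * of_rat l1 - D\<bar> < \<epsilon>" using dL by (simp add: D_def right_diff_distrib)
    have "\<epsilon> \<le> D/2" by (simp add: \<epsilon>_def)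
    then show ?thesis using h abs_less_iff[of "s * of_rat l1 - D" \<epsilon>] by linarith
  qed
  then have "s * of_rat l1 > 0" using Dpos by linarith
  then have sl: "\<sigma> * l1 > 0" by (metis of_rat_less_0_iff of_rat_mult not_less_iff_gr_or_eq mult_eq_0_iff of_rat_eq_0_iff)
  then have l1nz: "l1 \<noteq> 0" by auto
  define t where "t = \<sigma> * l1"
  define b where "b = - l0 / l1"
  have tpos: "t > 0" using sl by (simp add: t_def)
  have Lt: "L = smult t (u \<sigma> b)"
  proof -
    have "t * (- \<sigma> * b) = l0" using l1nz sgsg
      by (simp add: t_def b_def field_simps)
    moreover have "t * \<sigma> = l1" using sgsg by (simp add: t_def algebra_simps)
    ultimately show ?thesis unfolding Leq by (simp add: u_def)
  qed
  define e where "e = s * (a - of_rat b)"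
  have evLe: "qeval L a = (s * of_rat l1) * e" using Lt by (simp add: t_def e_def of_rat_mult)
  have epos: "e > 0" using evL(1) \<open>s * of_rat l1 > 0\<close> evLe by (simp add: zero_less_mult_iff)
  have "e * (D / 2) < 2 * A"
  proof -
    have "e * (D/2) < e * (s * of_rat l1)" using epos sl1 by simp
    then show ?thesis using evLe evL(2) by (simp add: mult.commute)
  qed
  then have "e * D < D * f0" using key by linarith
  then have "e < f0" using Dpos by (simp add: mult.commute)
  then have "u \<sigma> b \<in> Y" using region epos by (simp add: e_def)
  then have "L \<in> Y" using scaleY tpos Lt by simp
  then show False using notXY L(1) by blast
qed

end

context part
begin

lemma caseC:
  assumes one: "1 \<in> X" and noY1: "\<forall>b. u 1 b \<notin> Y" and noY2: "\<forall>b. u (-1) b \<notin> Y" and neY: "Y \<noteq> {}"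
  shows False
proof -
  have Lin: "L \<in> X" if L: "degree L \<le> 1" "qeval L a > 0" for L
  proof -
    define l0 l1 where "l0 = coeff L 0" and "l1 = coeff L 1"
    have Leq: "L = [:l0, l1:]" using lin_form[OF L(1)] by (simp add: l0_def l1_def)
    consider "l1 = 0" | "l1 > 0" | "l1 < 0" by linarith
    then show ?thesis
    proof cases
      case 1
      then have "(of_rat l0::real) > 0" using L(2) Leq by simp
      then have "[:l0:] \<in> X" using const_X one by simp
      then show ?thesis using Leq 1 by simp
    next
      case 2
      have Lt: "L = smult l1 (u 1 (- l0 / l1))" using 2 unfolding Leq by (simp add: u_def)
      then have "of_rat l1 * qeval (u 1 (- l0 / l1)) a > 0" using L(2) by (metis qe_smult)
      then have "qeval (u 1 (- l0 / l1)) a > 0" using 2 by (simp add: zero_less_mult_iff)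
      then have "u 1 (- l0 / l1) \<in> X" using inXY noY1 by blast
      then show ?thesis using scaleX 2 Lt by simp
    next
      case 3
      have Lt: "L = smult (-l1) (u (-1) (- l0 / l1))" using 3 unfolding Leq by (simp add: u_def)
      then have "of_rat (-l1) * qeval (u (-1) (- l0 / l1)) a > 0" using L(2) by (metis qe_smult)
      then have "qeval (u (-1) (- l0 / l1)) a > 0" using 3 by (simp add: zero_less_mult_iff)
      then have "u (-1) (- l0 / l1) \<in> X" using inXY noY2 by blast
      then have "smult (-l1) (u (-1) (- l0 / l1)) \<in> X" using scaleX[of "u (-1) (- l0 / l1)" "-l1"] 3 by linarith
      then show ?thesis using Lt by simp
    qed
  qed
  have uX: "u \<sigma> b \<in> X" if "\<sigma> = 1 \<or> \<sigma> = -1" "0 < of_rat \<sigma> * (a - of_rat b)" for \<sigma> b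
    using Lin[OF deg_u] that by simp
  have sg1: "(1::rat) = 1 \<or> (1::rat) = -1" and sg2: "(-1::rat) = 1 \<or> (-1::rat) = -1" by auto
  obtain b1 where b1: "0 < a - of_rat b1" "a - of_rat b1 < 1"
    using dens[OF sg1, of 1 a] by auto
  have lX: "u 1 b1 \<in> X" using uX[OF sg1] b1 by simp
  have l2: "\<bar>qeval (u 1 b1) a\<bar> \<le> 1" using b1 by simp
  have P: "\<exists>F\<in>X. degree F \<le> 2 \<and> coeff F 2 = 1 \<and> \<bar>qeval F a\<bar> < \<delta> \<and> \<bar>qeval (pderiv F) a\<bar> < \<delta>"
    if d: "\<delta> > 0" for \<delta>
  proof -
    obtain b where b: "0 < a - of_rat b" "a - of_rat b < min 1 (\<delta>/2)"
      using dens[OF sg1, of "min 1 (\<delta>/2)" a] d by auto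
    define e where "e = a - of_rat b"
    have e: "0 < e" "e < 1" "e < \<delta>/2" using b by (auto simp: e_def)
    have bX: "u 1 b \<in> X" using uX[OF sg1] b by simp
    have "e * e < e" using e mult_strict_right_mono[of e 1 e] by simp
    then have "e * e < \<delta>" using e by linarith
    then have "\<bar>qeval (u 1 b * u 1 b) a\<bar> < \<delta>" using e by (simp add: e_def[symmetric])
    moreover have "\<bar>qeval (pderiv (u 1 b * u 1 b)) a\<bar> < \<delta>"
      using e by (simp add: e_def[symmetric])
    ultimately show ?thesis using deg_uu[of 1 b 1 b] coeff2_uu[of 1 b 1 b] cl_mult[OF clX bX bX] by auto
  qed
  have N: "\<exists>F\<in>X. degree F \<le> 2 \<and> coeff F 2 = -1 \<and> \<bar>qeval F a\<bar> < \<delta> \<and> \<bar>qeval (pderiv F) a\<bar> < \<delta>"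
    if d: "\<delta> > 0" for \<delta>
  proof -
    obtain b where b: "0 < a - of_rat b" "a - of_rat b < min 1 (\<delta>/2)"
      using dens[OF sg1, of "min 1 (\<delta>/2)" a] d by auto
    obtain g where g: "0 < of_rat (-1) * (a - of_rat g)" "of_rat (-1) * (a - of_rat g) < min 1 (\<delta>/2)"
      using dens[OF sg2, of "min 1 (\<delta>/2)" a] d by auto
    define e where "e = a - of_rat b"
    define e' where "e' = of_rat g - a"
    have e: "0 < e" "e < 1" "e < \<delta>/2" using b by (auto simp: e_def)
    have e': "0 < e'" "e' < 1" "e' < \<delta>/2" using g by (auto simp: e'_def of_rat_minus)
    have bX: "u 1 b \<in> X" using uX[OF sg1] b by simp
    have gX: "u (-1) g \<in> X" using uX[OF sg2] g by simp
    have ev1: "qeval (u 1 b) a = e" by (simp add: e_def)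
    have ev2: "qeval (u (-1) g) a = e'" by (simp add: e'_def of_rat_minus)
    have "e * e' < e'" using e e' mult_strict_right_mono[of e 1 e'] by simp
    then have "e * e' < \<delta>" using e' by linarith
    moreover have "qeval (u 1 b * u (-1) g) a = e * e'" by (simp add: e_def e'_def of_rat_minus)
    ultimately have "\<bar>qeval (u 1 b * u (-1) g) a\<bar> < \<delta>" using e e' by simp
    moreover have "qeval (pderiv (u 1 b * u (-1) g)) a = e' - e" by (simp add: e_def e'_def of_rat_minus)
    then have "\<bar>qeval (pderiv (u 1 b * u (-1) g)) a\<bar> < \<delta>"
      using e e' by (simp add: abs_less_iff)
    ultimately show ?thesis using deg_uu[of 1 b "-1" g] coeff2_uu[of 1 b "-1" g] cl_mult[OF clX bX gX] by auto
  qed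
  have scX: "\<forall>p\<in>X. \<forall>r>0. smult r p \<in> X" using scaleX by blast
  have t2: "tinyP X a 2" using tiny_base[OF scX P N] by blast
  have tinyX: "tinyP X a n" if "n \<ge> 2" for n
    using tiny_all[of X "u 1 b1" a n] cl_mult[OF clX] lX deg_u coeff1_u l2 t2 that by simp
  have tiny: "\<exists>E. degree E \<le> n \<and> coeff E n = c \<and> \<bar>qeval E a\<bar> < \<delta> \<and> \<bar>qeval (pderiv E) a\<bar> < \<delta> \<and>
      (\<forall>w\<in>Y. qeval (w+E) a > 0 \<longrightarrow> w + E \<in> Y)" if hh: "n \<ge> 2" "c \<noteq> 0" "\<delta> > 0" for n c \<delta>
  proof -
    have "-c \<noteq> 0" using hh(2) by simp
    then obtain F where F: "F \<in> X" "degree F \<le> n" "coeff F n = -c" "\<bar>qeval F a\<bar> < \<delta>" "\<bar>qeval (pderiv F) a\<bar> < \<delta>"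
      using tinyX[OF hh(1)] hh(3) unfolding tinyP_def by blast
    have "\<forall>w\<in>Y. qeval (w + - F) a > 0 \<longrightarrow> w + - F \<in> Y"
      using T2Y[OF _ F(1)] by simp
    moreover have "degree (- F) \<le> n" "coeff (- F) n = c" "\<bar>qeval (- F) a\<bar> < \<delta>" "\<bar>qeval (pderiv (- F)) a\<bar> < \<delta>"
      using F by (simp_all add: pderiv_minus)
    ultimately show ?thesis by blast
  qed
  have posall: "\<forall>w\<in>Y. qeval w a > 0" using posY by blast
  obtain h where hY: "h \<in> Y" using neY by blast
  obtain L where L: "L \<in> Y" "degree L \<le> 1"
    using descent[OF posall tiny hY, of 1] by auto
  have "L \<in> X" using Lin[OF L(2) posY[OF L(1)]] .
  then show False using notXY L(1) by blast
qed

lemma main_one: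
  assumes one: "1 \<in> X" and neY: "Y \<noteq> {}"
  shows "((\<forall>p\<in>X. qeval (pderiv p) a \<le> 0) \<and> (\<forall>p\<in>Y. qeval (pderiv p) a \<ge> 0)) \<or>
         ((\<forall>p\<in>X. qeval (pderiv p) a \<ge> 0) \<and> (\<forall>p\<in>Y. qeval (pderiv p) a \<le> 0))"
proof (cases "\<exists>b. u 1 b \<in> Y")
  case True
  then obtain b where "u 1 b \<in> Y" by blast
  then interpret A: caseA a X Y 1 b using one by unfold_locales auto
  show ?thesis using A.parta A.partb by simp
next
  case False
  note F1 = this
  show ?thesis
  proof (cases "\<exists>b. u (-1) b \<in> Y")
    case True
    then obtain b where "u (-1) b \<in> Y" by blast
    then interpret A: caseA a X Y "-1" b using one by unfold_locales auto
    show ?thesis using A.parta A.partb by (simp add: of_rat_minus)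
  next
    case False
    then show ?thesis using caseC[OF one] F1 neY by blast
  qed
qed

end

theorem proposition4p1:
  fixes \<alpha> :: real and H1 H2 :: "rat poly set"
  assumes "Qpos_at \<alpha> = H1 \<union> H2"
    and "H1 \<inter> H2 = {}"
    and "H1 \<noteq> {}" and "H2 \<noteq> {}"
    and "add_mult_closed H1" and "add_mult_closed H2"
  defines "Hp \<equiv> {p \<in> Qpos_at \<alpha>. qeval (pderiv p) \<alpha> > 0}"
    and "H0 \<equiv> {p \<in> Qpos_at \<alpha>. qeval (pderiv p) \<alpha> = 0}"
    and "Hm \<equiv> {p \<in> Qpos_at \<alpha>. qeval (pderiv p) \<alpha> < 0}"
  shows "(H1 \<subseteq> Hp \<union> H0 \<and> H2 \<subseteq> Hm \<union> H0) \<or> (H1 \<subseteq> Hm \<union> H0 \<and> H2 \<subseteq> Hp \<union> H0)"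
proof -
  have sub1: "H1 \<subseteq> Qpos_at \<alpha>" and sub2: "H2 \<subseteq> Qpos_at \<alpha>" using assms(1) by auto
  have ge: "H \<subseteq> Hp \<union> H0" if "H \<subseteq> Qpos_at \<alpha>" "\<forall>p\<in>H. qeval (pderiv p) \<alpha> \<ge> 0" for H
    using that unfolding Hp_def H0_def by force
  have le: "H \<subseteq> Hm \<union> H0" if "H \<subseteq> Qpos_at \<alpha>" "\<forall>p\<in>H. qeval (pderiv p) \<alpha> \<le> 0" for H
    using that unfolding Hm_def H0_def by force
  have "(1::rat poly) \<in> Qpos_at \<alpha>" by (simp add: Qpos_at_def)
  then have "1 \<in> H1 \<or> 1 \<in> H2" using assms(1) by blast
  then show ?thesis
  proof
    assume one: "1 \<in> H1"
    interpret P: part \<alpha> H1 H2 using assms(1,2,5,6) by unfold_locales auto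
    from P.main_one[OF one assms(4)] show ?thesis using ge le sub1 sub2 by blast
  next
    assume one: "1 \<in> H2"
    interpret P: part \<alpha> H2 H1 using assms(1,2,5,6) by unfold_locales auto
    from P.main_one[OF one assms(3)] show ?thesis using ge le sub1 sub2 by blast
  qed
qed

end
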